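(* Let $\hat\beta$ be the Exclusive Lasso estimate, let $\mathcal{E} = \left\{ i : \frac{|X_i^T (y - X\hat\beta)|}{\|\hat\beta_g\|_1} = \lambda \right\}$ (with $g$ the group containing $i$) be the weighted equicorrelation set, and let $\gamma'$ be the vector with entries $\gamma'_i = \|\hat\beta_g\|_1 - |\hat\beta_i|$ for $i \in \mathcal{E}$, $i \in g$. Then $$\hat\beta_{\mathcal{E}} = (X_{\mathcal{E}}^T X_{\mathcal{E}} + \lambda I)^{-1}\left[X_{\mathcal{E}}^T y - \lambda \gamma' s\right] \quad\text{and}\quad \hat\beta_{\mathcal{E}^c} = 0,$$ where $s \in \{-1,1\}^{|\mathcal{E}|}$ is a vector of signs that satisfies the optimality conditions, $\gamma' s$ denotes the elementwise product, and $\mathcal{E}^c$ is the complement of $\mathcal{E}$.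
   Context: Linear model $y = X\beta^* + \epsilon$ with $X \in \mathbb{R}^{n\times p}$, centered response, and a collection $\mathcal{G}$ of non-overlapping groups partitioning $\{1,\dots,p\}$. The Exclusive Lasso estimate is $\hat\beta = \arg\min_\beta \frac{1}{2}\|y - X\beta\|_2^2 + \lambda \frac{1}{2}\sum_{g\in\mathcal{G}} \|\beta_g\|_1^2$ with $\lambda>0$. Its optimality conditions are $-X^T(y - X\hat\beta) + \lambda z = 0$ with $z_i = \mathrm{sign}(\hat\beta_i)\|\hat\beta_g\|_1$ if $\hat\beta_i \neq 0$ and $z_i \in [-\|\hat\beta_g\|_1, \|\hat\beta_g\|_1]$ if $\hat\beta_i = 0$, for $i \in g$. *)

theory Defs
  imports "Jordan_Normal_Form.Gauss_Jordan_Elimination" "Jordan_Normal_Form.DL_Submatrix"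
begin

definition group_partition :: "nat set set \<Rightarrow> nat \<Rightarrow> bool" where
  "group_partition G p \<longleftrightarrow> (\<forall>g\<in>G. g \<noteq> {}) \<and> \<Union>G = {0..<p} \<and>
     (\<forall>g\<in>G. \<forall>h\<in>G. g \<noteq> h \<longrightarrow> g \<inter> h = {})"

definition group_of :: "nat set set \<Rightarrow> nat \<Rightarrow> nat set" where
  "group_of G i = (THE g. g \<in> G \<and> i \<in> g)"

definition group_l1 :: "nat set set \<Rightarrow> real vec \<Rightarrow> nat \<Rightarrow> real" where
  "group_l1 G b i = (\<Sum>j\<in>group_of G i. \<bar>b $ j\<bar>)"

definition exclusive_lasso_obj :: "real mat \<Rightarrow> real vec \<Rightarrow> real \<Rightarrow> nat set set \<Rightarrow> real vec \<Rightarrow> real" where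
  "exclusive_lasso_obj X y lam G b =
     1/2 * ((y - X *\<^sub>v b) \<bullet> (y - X *\<^sub>v b)) + lam * (1/2) * (\<Sum>g\<in>G. (\<Sum>j\<in>g. \<bar>b $ j\<bar>)^2)"

definition is_exclusive_lasso :: "real mat \<Rightarrow> real vec \<Rightarrow> real \<Rightarrow> nat set set \<Rightarrow> real vec \<Rightarrow> bool" where
  "is_exclusive_lasso X y lam G b \<longleftrightarrow> b \<in> carrier_vec (dim_col X) \<and>
     (\<forall>\<beta>\<in>carrier_vec (dim_col X). exclusive_lasso_obj X y lam G b \<le> exclusive_lasso_obj X y lam G \<beta>)"

text \<open>Weighted equicorrelation set. (Division by 0 yields 0 in HOL, so indices whose
  group is entirely zero are never in the set since lam > 0.)\<close>
definition equicorr_set :: "real mat \<Rightarrow> real vec \<Rightarrow> real \<Rightarrow> nat set set \<Rightarrow> real vec \<Rightarrow> nat set" where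
  "equicorr_set X y lam G b =
     {i. i < dim_col X \<and> \<bar>col X i \<bullet> (y - X *\<^sub>v b)\<bar> / group_l1 G b i = lam}"

text \<open>Subvector with the entries indexed by E (in increasing order), consistent with submatrix.\<close>
definition subvec :: "'a vec \<Rightarrow> nat set \<Rightarrow> 'a vec" where
  "subvec v E = vec (card {i. i < dim_vec v \<and> i \<in> E}) (\<lambda>k. v $ pick E k)"

definition gamma' :: "nat set set \<Rightarrow> real vec \<Rightarrow> nat set \<Rightarrow> real vec" where
  "gamma' G b E = vec (card E) (\<lambda>k. group_l1 G b (pick E k) - \<bar>b $ pick E k\<bar>)"

definition vec_hadamard :: "real vec \<Rightarrow> real vec \<Rightarrow> real vec" where
  "vec_hadamard u v = vec (dim_vec u) (\<lambda>k. u $ k * v $ k)"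

end

theory Submission imports Defs "Jordan_Normal_Form.Determinant" begin

lemma quad_zero:
  fixes a K d :: real
  assumes d: "d > 0" and K: "K \<ge> 0" and h: "\<And>t. \<bar>t\<bar> < d \<Longrightarrow> a * t + K * t^2 \<ge> 0"
  shows "a = 0"
proof (rule ccontr)
  assume a: "a \<noteq> 0"
  define e where "e = min (d/2) (\<bar>a\<bar> / (2*(K+1)))"
  have e0: "e > 0" using d a K by (simp add: e_def)
  have ed: "e < d" using d by (simp add: e_def)
  have eK: "K * e \<le> \<bar>a\<bar>/2"
  proof -
    have "e \<le> \<bar>a\<bar> / (2*(K+1))" by (simp add: e_def)
    hence "K * e \<le> K * (\<bar>a\<bar> / (2*(K+1)))" by (rule mult_left_mono[OF _ K])
    also have "\<dots> \<le> \<bar>a\<bar>/2" using K by (simp add: field_simps)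
    finally show ?thesis .
  qed
  define t where "t = - sgn a * e"
  have "\<bar>t\<bar> = e" using e0 a by (cases "a > 0") (auto simp: t_def)
  hence "\<bar>t\<bar> < d" using ed by simp
  hence "a * t + K * t^2 \<ge> 0" by (rule h)
  moreover have "a * t + K * t^2 = e * (K * e - \<bar>a\<bar>)"
    using a by (cases "a > 0") (auto simp: t_def power2_eq_square algebra_simps)
  moreover have "e * (K * e - \<bar>a\<bar>) < 0" using e0 eK a by (simp add: mult_pos_neg)
  ultimately show False by linarith
qed

lemma pick_sum:
  assumes "finite E"
  shows "(\<Sum>k<card E. f (pick E k)) = (\<Sum>i\<in>E. f i)"
proof -
  have inj: "inj_on (pick E) {..<card E}"
    by (rule inj_onI) (metis lessThan_iff nat_neq_iff pick_mono)
  have sub: "pick E ` {..<card E} \<subseteq> E" using pick_in_set by auto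
  have "pick E ` {..<card E} = E"
    using card_subset_eq[OF assms sub] card_image[OF inj] by simp
  thus ?thesis using sum.reindex[OF inj, of f] by simp
qed

lemma group_facts:
  assumes G: "group_partition G p" and i: "i < p"
  shows "group_of G i \<in> G" "i \<in> group_of G i"
    "\<And>h. h \<in> G \<Longrightarrow> h \<noteq> group_of G i \<Longrightarrow> i \<notin> h"
proof -
  have "i \<in> \<Union>G" using G i unfolding group_partition_def by auto
  then obtain g where g: "g \<in> G" "i \<in> g" by blast
  have disj: "\<forall>g\<in>G. \<forall>h\<in>G. g \<noteq> h \<longrightarrow> g \<inter> h = {}" using G by (simp add: group_partition_def)
  have uq: "\<And>h. h \<in> G \<Longrightarrow> i \<in> h \<Longrightarrow> h = g"
  proof (rule ccontr)
    fix h assume h: "h \<in> G" "i \<in> h" "h \<noteq> g"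
    hence "h \<inter> g = {}" using disj g(1) by blast
    thus False using h(2) g(2) by blast
  qed
  have go: "group_of G i = g" unfolding group_of_def
  proof (rule the_equality)
    show "g \<in> G \<and> i \<in> g" using g by simp
  next
    fix h assume "h \<in> G \<and> i \<in> h" thus "h = g" using uq by blast
  qed
  show "group_of G i \<in> G" "i \<in> group_of G i" using g go by simp_all
  show "\<And>h. h \<in> G \<Longrightarrow> h \<noteq> group_of G i \<Longrightarrow> i \<notin> h"
    using uq go by blast
qed

lemma groups_sub:
  assumes G: "group_partition G p"
  shows "finite G" "\<And>g. g \<in> G \<Longrightarrow> g \<subseteq> {0..<p}" "\<And>g. g \<in> G \<Longrightarrow> finite g"
proof -
  have U: "\<Union>G = {0..<p}" using G unfolding group_partition_def by auto
  show sub: "\<And>g. g \<in> G \<Longrightarrow> g \<subseteq> {0..<p}" using U by auto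
  show "\<And>g. g \<in> G \<Longrightarrow> finite g" using sub finite_subset by blast
  have "G \<subseteq> Pow {0..<p}" using sub by auto
  thus "finite G" using finite_subset by blast
qed

lemma self_scalar_nonneg: "(v :: real vec) \<bullet> v \<ge> 0"
  unfolding scalar_prod_def by (rule sum_nonneg) auto

lemma key_alg: "\<sigma>*\<sigma> = (1::real) \<Longrightarrow> 1/2 * rr + lam * (1/2) * P \<le>
        1/2 * (rr - 2*t*cr + t^2 * cc) + lam * (1/2) * (P + ((S + \<sigma>*t)^2 - S^2))
   \<Longrightarrow> (-(cr) + lam*\<sigma>*S) * t + ((cc + lam)/2) * t^2 \<ge> 0"
proof -
  assume s: "\<sigma>*\<sigma> = (1::real)" and h: "1/2 * rr + lam * (1/2) * P \<le>
        1/2 * (rr - 2*t*cr + t^2 * cc) + lam * (1/2) * (P + ((S + \<sigma>*t)^2 - S^2))"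
  have e: "(S + \<sigma>*t)^2 - S^2 = 2*S*\<sigma>*t + t^2"
  proof -
    have "(S + \<sigma>*t)^2 - S^2 = 2*S*\<sigma>*t + (\<sigma>*\<sigma>)*t^2" by (simp add: power2_eq_square algebra_simps)
    thus ?thesis using s by simp
  qed
  have "(-(cr) + lam*\<sigma>*S) * t + ((cc + lam)/2) * t^2 =
     (1/2 * (rr - 2*t*cr + t^2 * cc) + lam * (1/2) * (P + (2*S*\<sigma>*t + t^2))) - (1/2 * rr + lam * (1/2) * P)"
    by (simp add: algebra_simps add_divide_distrib)
  moreover have "1/2 * rr + lam * (1/2) * P \<le>
        1/2 * (rr - 2*t*cr + t^2 * cc) + lam * (1/2) * (P + (2*S*\<sigma>*t + t^2))" using h unfolding e .
  ultimately show ?thesis by linarith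
qed

lemma foc:
  assumes X: "X \<in> carrier_mat n p" and y: "y \<in> carrier_vec n" and lam: "lam > 0"
    and G: "group_partition G p" and b: "is_exclusive_lasso X y lam G b"
    and i: "i < p" and bi: "b $ i \<noteq> 0"
  shows "col X i \<bullet> (y - X *\<^sub>v b) = lam * (sgn (b $ i) * group_l1 G b i)"
proof -
  define c where "c = col X i"
  define r where "r = y - X *\<^sub>v b"
  define S where "S = group_l1 G b i"
  define \<sigma> where "\<sigma> = sgn (b $ i)"
  define gi where "gi = group_of G i"
  define \<beta> where "\<beta> = (\<lambda>t::real. b + t \<cdot>\<^sub>v unit_vec p i)"
  have bc: "b \<in> carrier_vec p" using b X unfolding is_exclusive_lasso_def by auto
  have \<beta>c: "\<And>t. \<beta> t \<in> carrier_vec p" using bc by (auto simp: \<beta>_def)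
  have \<beta>i: "\<And>t j. j < p \<Longrightarrow> \<beta> t $ j = b $ j + (if j = i then t else 0)"
    using bc i by (auto simp: \<beta>_def)
  have dc: "dim_vec c = n" "dim_vec r = n" using X y by (auto simp: c_def r_def)
  have comp: "\<And>t k. k < n \<Longrightarrow> (y - X *\<^sub>v \<beta> t) $ k = r $ k - t * c $ k"
  proof -
    fix t k assume k: "k < n"
    have "(X *\<^sub>v \<beta> t) $ k = (\<Sum>j = 0..<p. X $$ (k,j) * (b $ j + (if j = i then t else 0)))"
      using X k \<beta>c[of t] \<beta>i by (simp add: scalar_prod_def)
    also have "\<dots> = (\<Sum>j = 0..<p. X $$ (k,j) * b $ j) + (\<Sum>j = 0..<p. if j = i then X $$ (k,j) * t else 0)"
      by (subst sum.distrib[symmetric]) (rule sum.cong, auto simp: distrib_left)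
    also have "(\<Sum>j = 0..<p. if j = i then X $$ (k,j) * t else 0) = X $$ (k,i) * t"
      using i by simp
    also have "(\<Sum>j = 0..<p. X $$ (k,j) * b $ j) = (X *\<^sub>v b) $ k"
      using X k bc by (simp add: scalar_prod_def)
    finally show "(y - X *\<^sub>v \<beta> t) $ k = r $ k - t * c $ k"
      using X y k i by (simp add: r_def c_def)
  qed
  have resid: "\<And>t. (y - X *\<^sub>v \<beta> t) \<bullet> (y - X *\<^sub>v \<beta> t) = r \<bullet> r - 2*t*(c \<bullet> r) + t^2 * (c \<bullet> c)"
  proof -
    fix t
    have "(y - X *\<^sub>v \<beta> t) \<bullet> (y - X *\<^sub>v \<beta> t) = (\<Sum>k = 0..<n. (r $ k - t * c $ k) * (r $ k - t * c $ k))"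
      using X y comp by (simp add: scalar_prod_def)
    also have "\<dots> = (\<Sum>k = 0..<n. r $ k * r $ k) - 2*t*(\<Sum>k = 0..<n. c $ k * r $ k) + t^2 * (\<Sum>k = 0..<n. c $ k * c $ k)"
      by (simp add: sum_subtractf sum.distrib sum_distrib_left algebra_simps power2_eq_square)
    finally show "(y - X *\<^sub>v \<beta> t) \<bullet> (y - X *\<^sub>v \<beta> t) = r \<bullet> r - 2*t*(c \<bullet> r) + t^2 * (c \<bullet> c)"
      using dc by (simp add: scalar_prod_def)
  qed
  note gf = group_facts[OF G i] and gs = groups_sub[OF G]
  have S_def': "S = (\<Sum>j\<in>gi. \<bar>b $ j\<bar>)" by (simp add: S_def gi_def group_l1_def)
  have pen: "\<And>t. \<bar>t\<bar> < \<bar>b $ i\<bar> \<Longrightarrow>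
     (\<Sum>g\<in>G. (\<Sum>j\<in>g. \<bar>\<beta> t $ j\<bar>)^2) = (\<Sum>g\<in>G. (\<Sum>j\<in>g. \<bar>b $ j\<bar>)^2) + ((S + \<sigma>*t)^2 - S^2)"
  proof -
    fix t :: real assume t: "\<bar>t\<bar> < \<bar>b $ i\<bar>"
    have other: "\<And>g. g \<in> G - {gi} \<Longrightarrow> (\<Sum>j\<in>g. \<bar>\<beta> t $ j\<bar>) = (\<Sum>j\<in>g. \<bar>b $ j\<bar>)"
    proof -
      fix g assume g: "g \<in> G - {gi}"
      have "i \<notin> g" using gf(3)[of g] g by (auto simp: gi_def)
      have gG: "g \<in> G" using g by simp
      show "(\<Sum>j\<in>g. \<bar>\<beta> t $ j\<bar>) = (\<Sum>j\<in>g. \<bar>b $ j\<bar>)"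
      proof (rule sum.cong[OF refl])
        fix j assume "j \<in> g"
        hence "j < p" "j \<noteq> i" using gs(2)[OF gG] \<open>i \<notin> g\<close> by auto
        thus "\<bar>\<beta> t $ j\<bar> = \<bar>b $ j\<bar>" using \<beta>i by simp
      qed
    qed
    have abs_i: "\<bar>b $ i + t\<bar> = \<bar>b $ i\<bar> + \<sigma> * t"
      using t by (cases "b $ i > 0") (auto simp: \<sigma>_def)
    have fgi: "finite gi" "i \<in> gi" "gi \<in> G" using gs gf by (auto simp: gi_def)
    have "(\<Sum>j\<in>gi. \<bar>\<beta> t $ j\<bar>) = \<bar>\<beta> t $ i\<bar> + (\<Sum>j\<in>gi - {i}. \<bar>\<beta> t $ j\<bar>)"
      using fgi by (simp add: sum.remove)
    also have "(\<Sum>j\<in>gi - {i}. \<bar>\<beta> t $ j\<bar>) = (\<Sum>j\<in>gi - {i}. \<bar>b $ j\<bar>)"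
    proof (rule sum.cong[OF refl])
      fix j assume "j \<in> gi - {i}"
      hence "j < p" "j \<noteq> i" using gs(2)[OF fgi(3)] by auto
      thus "\<bar>\<beta> t $ j\<bar> = \<bar>b $ j\<bar>" using \<beta>i by simp
    qed
    also have "\<bar>\<beta> t $ i\<bar> = \<bar>b $ i\<bar> + \<sigma> * t" using \<beta>i[OF i] abs_i by simp
    also have "\<bar>b $ i\<bar> + \<sigma> * t + (\<Sum>j\<in>gi - {i}. \<bar>b $ j\<bar>) = S + \<sigma> * t"
      using fgi by (simp add: S_def' sum.remove)
    finally have gi_eq: "(\<Sum>j\<in>gi. \<bar>\<beta> t $ j\<bar>) = S + \<sigma> * t" .
    have "(\<Sum>g\<in>G. (\<Sum>j\<in>g. \<bar>\<beta> t $ j\<bar>)^2) = (S + \<sigma> * t)^2 + (\<Sum>g\<in>G-{gi}. (\<Sum>j\<in>g. \<bar>\<beta> t $ j\<bar>)^2)"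
      using gs(1) fgi gi_eq by (simp add: sum.remove)
    also have "(\<Sum>g\<in>G-{gi}. (\<Sum>j\<in>g. \<bar>\<beta> t $ j\<bar>)^2) = (\<Sum>g\<in>G-{gi}. (\<Sum>j\<in>g. \<bar>b $ j\<bar>)^2)"
      using other by (intro sum.cong) auto
    also have "(\<Sum>g\<in>G. (\<Sum>j\<in>g. \<bar>b $ j\<bar>)^2) = S^2 + (\<Sum>g\<in>G-{gi}. (\<Sum>j\<in>g. \<bar>b $ j\<bar>)^2)"
      using gs(1) fgi by (simp add: sum.remove S_def')
    ultimately show "(\<Sum>g\<in>G. (\<Sum>j\<in>g. \<bar>\<beta> t $ j\<bar>)^2) = (\<Sum>g\<in>G. (\<Sum>j\<in>g. \<bar>b $ j\<bar>)^2) + ((S + \<sigma>*t)^2 - S^2)"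
      by simp
  qed
  have key: "\<And>t. \<bar>t\<bar> < \<bar>b $ i\<bar> \<Longrightarrow> (-(c \<bullet> r) + lam*\<sigma>*S) * t + ((c \<bullet> c + lam)/2) * t^2 \<ge> 0"
  proof -
    fix t :: real assume t: "\<bar>t\<bar> < \<bar>b $ i\<bar>"
    have "exclusive_lasso_obj X y lam G b \<le> exclusive_lasso_obj X y lam G (\<beta> t)"
      using b \<beta>c X unfolding is_exclusive_lasso_def by auto
    hence "1/2 * (r \<bullet> r) + lam * (1/2) * (\<Sum>g\<in>G. (\<Sum>j\<in>g. \<bar>b $ j\<bar>)^2) \<le>
        1/2 * (r \<bullet> r - 2*t*(c \<bullet> r) + t^2 * (c \<bullet> c)) + lam * (1/2) * ((\<Sum>g\<in>G. (\<Sum>j\<in>g. \<bar>b $ j\<bar>)^2) + ((S + \<sigma>*t)^2 - S^2))"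
      unfolding exclusive_lasso_obj_def resid pen[OF t] r_def by simp
    moreover have "\<sigma>^2 = 1" using bi by (cases "b $ i > 0") (auto simp: \<sigma>_def)
    moreover have "\<sigma>*\<sigma> = 1" using bi by (cases "b $ i > 0") (auto simp: \<sigma>_def)
    ultimately show "(-(c \<bullet> r) + lam*\<sigma>*S) * t + ((c \<bullet> c + lam)/2) * t^2 \<ge> 0"
      using key_alg by blast
  qed
  have "-(c \<bullet> r) + lam*\<sigma>*S = 0"
    by (rule quad_zero[OF _ _ key]) (use bi lam self_scalar_nonneg[of c] in auto)
  thus ?thesis by (simp add: c_def r_def S_def \<sigma>_def)
qed

theorem proposition2:
  fixes X :: "real mat" and y :: "real vec" and lam :: real and G :: "nat set set"
    and n p :: nat and b s :: "real vec"
  assumes X: "X \<in> carrier_mat n p"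
    and y: "y \<in> carrier_vec n"
    and centered: "(\<Sum>i<n. y $ i) = 0"
    and lam: "lam > 0"
    and G: "group_partition G p"
    and b: "is_exclusive_lasso X y lam G b"
    and s_dim: "dim_vec s = card (equicorr_set X y lam G b)"
    and s_sign: "\<forall>k < card (equicorr_set X y lam G b). s $ k = 1 \<or> s $ k = -1"
    and s_opt: "\<forall>k < card (equicorr_set X y lam G b).
        let i = pick (equicorr_set X y lam G b) k in
          (b $ i \<noteq> 0 \<longrightarrow> s $ k = sgn (b $ i)) \<and>
          col X i \<bullet> (y - X *\<^sub>v b) = lam * (s $ k * group_l1 G b i)"
  shows "(let E = equicorr_set X y lam G b; XE = submatrix X UNIV E in
           subvec b E = the (mat_inverse (XE\<^sup>T * XE + lam \<cdot>\<^sub>m 1\<^sub>m (card E)))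
                          *\<^sub>v (XE\<^sup>T *\<^sub>v y - lam \<cdot>\<^sub>v vec_hadamard (gamma' G b E) s))
         \<and> (\<forall>i < p. i \<notin> equicorr_set X y lam G b \<longrightarrow> b $ i = 0)"
proof -
  define E where "E = equicorr_set X y lam G b"
  define XE where "XE = submatrix X UNIV E"
  define m where "m = card E"
  define r where "r = y - X *\<^sub>v b"
  have bc: "b \<in> carrier_vec p" using b X unfolding is_exclusive_lasso_def by auto
  have Esub: "E \<subseteq> {..<p}" using X by (auto simp: E_def equicorr_set_def)
  have fE: "finite E" using Esub finite_subset by blast
  have cardE: "card {j. j < p \<and> j \<in> E} = m"
  proof -
    have "{j. j < p \<and> j \<in> E} = E" using Esub by auto
    thus ?thesis by (simp add: m_def)
  qed
  have pickE: "\<And>k. k < m \<Longrightarrow> pick E k \<in> E \<and> pick E k < p"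
  proof -
    fix k assume "k < m"
    hence "pick E k \<in> E" using pick_in_set[of k E] by (simp add: m_def)
    thus "pick E k \<in> E \<and> pick E k < p" using Esub by auto
  qed
  have rowsN: "card {i. i < dim_row X \<and> i \<in> (UNIV::nat set)} = n"
  proof -
    have "{i. i < dim_row X \<and> i \<in> (UNIV::nat set)} = {..<n}" using X by auto
    thus ?thesis by simp
  qed
  have colsM: "card {j. j < dim_col X \<and> j \<in> E} = m" using X cardE by simp
  have XEc: "XE \<in> carrier_mat n m"
  proof (rule carrier_matI)
    show "dim_row XE = n" unfolding XE_def dim_submatrix rowsN ..
    show "dim_col XE = m" unfolding XE_def dim_submatrix colsM ..
  qed
  have XEi: "\<And>a k. a < n \<Longrightarrow> k < m \<Longrightarrow> XE $$ (a,k) = X $$ (a, pick E k)"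
  proof -
    fix a k assume "a < n" "k < m"
    thus "XE $$ (a,k) = X $$ (a, pick E k)"
      unfolding XE_def using submatrix_index[of a X UNIV k E] rowsN colsM pick_UNIV by simp
  qed
  have zero: "\<forall>i < p. i \<notin> E \<longrightarrow> b $ i = 0"
  proof (intro allI impI, rule ccontr)
    fix i assume i: "i < p" "i \<notin> E" "b $ i \<noteq> 0"
    have f: "col X i \<bullet> r = lam * (sgn (b $ i) * group_l1 G b i)"
      using foc[OF X y lam G b i(1) i(3)] by (simp add: r_def)
    note gf = group_facts[OF G i(1)] and gs = groups_sub[OF G]
    have "\<bar>b $ i\<bar> \<le> group_l1 G b i" unfolding group_l1_def
      using gf gs by (intro member_le_sum) auto
    hence S: "group_l1 G b i > 0" using i(3) by linarith
    have "\<bar>col X i \<bullet> r\<bar> = lam * group_l1 G b i"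
      using f S lam i(3) by (simp add: abs_mult abs_sgn_eq)
    hence "\<bar>col X i \<bullet> r\<bar> / group_l1 G b i = lam" using S by simp
    hence "i \<in> E" using i X by (simp add: E_def equicorr_set_def r_def)
    thus False using i by simp
  qed
  define bE where "bE = subvec b E"
  have bEc: "bE \<in> carrier_vec m" using bc cardE by (simp add: bE_def subvec_def)
  have bEi: "\<And>k. k < m \<Longrightarrow> bE $ k = b $ pick E k" using bc cardE by (simp add: bE_def subvec_def)
  have XEb: "XE *\<^sub>v bE = X *\<^sub>v b"
  proof (rule eq_vecI)
    show "dim_vec (XE *\<^sub>v bE) = dim_vec (X *\<^sub>v b)" using XEc X by simp
    fix a assume "a < dim_vec (X *\<^sub>v b)"
    hence a: "a < n" using X by simp
    have "(XE *\<^sub>v bE) $ a = (\<Sum>k<m. X $$ (a, pick E k) * b $ pick E k)"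
      using XEc bEc a XEi bEi by (simp add: scalar_prod_def atLeast0LessThan)
    also have "\<dots> = (\<Sum>j\<in>E. X $$ (a, j) * b $ j)" unfolding m_def by (rule pick_sum[OF fE])
    also have "\<dots> = (\<Sum>j<p. X $$ (a, j) * b $ j)"
      using zero Esub by (intro sum.mono_neutral_left) auto
    also have "\<dots> = (X *\<^sub>v b) $ a" using X a bc by (simp add: scalar_prod_def atLeast0LessThan)
    finally show "(XE *\<^sub>v bE) $ a = (X *\<^sub>v b) $ a" .
  qed
  have XEt: "\<And>w k. w \<in> carrier_vec n \<Longrightarrow> k < m \<Longrightarrow> (XE\<^sup>T *\<^sub>v w) $ k = col X (pick E k) \<bullet> w"
  proof -
    fix w :: "real vec" and k assume w: "w \<in> carrier_vec n" and k: "k < m"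
    have "(XE\<^sup>T *\<^sub>v w) $ k = (\<Sum>a = 0..<n. X $$ (a, pick E k) * w $ a)"
      using XEc w k XEi by (simp add: scalar_prod_def)
    also have "\<dots> = col X (pick E k) \<bullet> w" using X w pickE[OF k] by (simp add: scalar_prod_def)
    finally show "(XE\<^sup>T *\<^sub>v w) $ k = col X (pick E k) \<bullet> w" .
  qed
  define M where "M = XE\<^sup>T * XE + lam \<cdot>\<^sub>m 1\<^sub>m m"
  have Mc: "M \<in> carrier_mat m m" using XEc by (simp add: M_def)
  have Mv: "\<And>v. v \<in> carrier_vec m \<Longrightarrow> M *\<^sub>v v = XE\<^sup>T *\<^sub>v (XE *\<^sub>v v) + lam \<cdot>\<^sub>v v"
  proof -
    fix v :: "real vec" assume v: "v \<in> carrier_vec m"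
    have "M *\<^sub>v v = XE\<^sup>T * XE *\<^sub>v v + (lam \<cdot>\<^sub>m 1\<^sub>m m) *\<^sub>v v"
      unfolding M_def using XEc v by (intro add_mult_distrib_mat_vec) auto
    also have "XE\<^sup>T * XE *\<^sub>v v = XE\<^sup>T *\<^sub>v (XE *\<^sub>v v)"
      using XEc v by (intro assoc_mult_mat_vec) auto
    also have "(lam \<cdot>\<^sub>m 1\<^sub>m m) *\<^sub>v v = lam \<cdot>\<^sub>v v"
    proof (rule eq_vecI)
      fix i assume "i < dim_vec (lam \<cdot>\<^sub>v v)"
      hence i: "i < m" using v by simp
      have "((lam \<cdot>\<^sub>m 1\<^sub>m m) *\<^sub>v v) $ i = (\<Sum>j = 0..<m. lam * (if j = i then 1 else 0) * v $ j)"
        using i v by (simp add: scalar_prod_def)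
      also have "\<dots> = (\<Sum>j = 0..<m. (if j = i then lam * v $ j else 0))"
        by (rule sum.cong) auto
      also have "\<dots> = lam * v $ i" using i by simp
      finally show "((lam \<cdot>\<^sub>m 1\<^sub>m m) *\<^sub>v v) $ i = (lam \<cdot>\<^sub>v v) $ i" using i v by simp
    qed (use v in simp)
    finally show "M *\<^sub>v v = XE\<^sup>T *\<^sub>v (XE *\<^sub>v v) + lam \<cdot>\<^sub>v v" .
  qed
  have inj: "\<And>v. v \<in> carrier_vec m \<Longrightarrow> M *\<^sub>v v = 0\<^sub>v m \<Longrightarrow> v = 0\<^sub>v m"
  proof -
    fix v :: "real vec" assume v: "v \<in> carrier_vec m" and Mv0: "M *\<^sub>v v = 0\<^sub>v m"
    have w: "XE *\<^sub>v v \<in> carrier_vec n" using XEc v by simp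
    have "0 = v \<bullet> (M *\<^sub>v v)" using Mv0 v by simp
    also have "\<dots> = v \<bullet> (XE\<^sup>T *\<^sub>v (XE *\<^sub>v v)) + lam * (v \<bullet> v)"
      using Mv[OF v] v XEc by (simp add: scalar_prod_add_distrib[of _ m] scalar_prod_smult_distrib[of _ m])
    also have "v \<bullet> (XE\<^sup>T *\<^sub>v (XE *\<^sub>v v)) = (XE *\<^sub>v v) \<bullet> (XE *\<^sub>v v)"
      using comm_scalar_prod[of v m "XE\<^sup>T *\<^sub>v (XE *\<^sub>v v)"] transpose_vec_mult_scalar[OF XEc v w] v XEc
      by simp
    finally have "0 = (XE *\<^sub>v v) \<bullet> (XE *\<^sub>v v) + lam * (v \<bullet> v)" .
    hence vv: "v \<bullet> v = 0" using self_scalar_nonneg[of "XE *\<^sub>v v"] self_scalar_nonneg[of v] lam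
      by (smt (verit) mult_pos_pos)
    have "\<forall>k\<in>{0..<m}. v $ k * v $ k = 0"
      using vv v by (subst sum_nonneg_eq_0_iff[symmetric]) (auto simp: scalar_prod_def)
    thus "v = 0\<^sub>v m" using v by (intro eq_vecI) auto
  qed
  have "det M \<noteq> 0" using inj det_0_iff_vec_prod_zero[OF Mc] by blast
  hence unit: "M \<in> Units (ring_mat TYPE(real) m ())" by (rule det_non_zero_imp_unit[OF Mc])
  obtain B where B: "mat_inverse M = Some B" using mat_inverse(1)[OF Mc] unit by fastforce
  have BM: "B * M = 1\<^sub>m m" "B \<in> carrier_mat m m" using mat_inverse(2)[OF Mc B] by auto
  define rhs where "rhs = XE\<^sup>T *\<^sub>v y - lam \<cdot>\<^sub>v vec_hadamard (gamma' G b E) s"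
  have eq: "M *\<^sub>v bE = rhs"
  proof (rule eq_vecI)
    show "dim_vec (M *\<^sub>v bE) = dim_vec rhs" using Mc XEc by (simp add: rhs_def vec_hadamard_def gamma'_def m_def)
    fix k assume "k < dim_vec rhs"
    hence k: "k < m" using XEc by (simp add: rhs_def vec_hadamard_def gamma'_def m_def)
    define i where "i = pick E k"
    have so: "(b $ i \<noteq> 0 \<longrightarrow> s $ k = sgn (b $ i)) \<and> col X i \<bullet> r = lam * (s $ k * group_l1 G b i)"
      using s_opt k by (simp add: E_def[symmetric] m_def i_def r_def Let_def)
    have bis: "b $ i = s $ k * \<bar>b $ i\<bar>" using so by (cases "b $ i = 0") (auto simp: sgn_mult_abs)
    have ci: "dim_vec (col X i) = n" using X by simp
    have cr: "col X i \<bullet> r = col X i \<bullet> y - col X i \<bullet> (X *\<^sub>v b)"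
      unfolding r_def using X y bc by (intro scalar_prod_minus_distrib) auto
    have "(M *\<^sub>v bE) $ k = col X i \<bullet> (X *\<^sub>v b) + lam * b $ i"
      using Mv[OF bEc] k XEt[of "X *\<^sub>v b" k] XEb XEc bEc bEi X bc by (simp add: i_def)
    moreover have "rhs $ k = col X i \<bullet> y - lam * ((group_l1 G b i - \<bar>b $ i\<bar>) * s $ k)"
      using k XEt[OF y k] XEc y s_dim by (simp add: rhs_def vec_hadamard_def gamma'_def m_def i_def E_def)
    ultimately show "(M *\<^sub>v bE) $ k = rhs $ k" using so cr bis
      by (simp add: algebra_simps)
  qed
  have "B *\<^sub>v rhs = bE"
  proof -
    have "B *\<^sub>v rhs = B *\<^sub>v (M *\<^sub>v bE)" using eq by simp
    also have "\<dots> = (B * M) *\<^sub>v bE" using BM Mc bEc by (intro assoc_mult_mat_vec[symmetric]) auto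
    also have "\<dots> = bE" using BM bEc by simp
    finally show ?thesis .
  qed
  thus ?thesis using zero B
    by (simp add: Let_def E_def[symmetric] XE_def[symmetric] m_def[symmetric] M_def[symmetric] rhs_def[symmetric] bE_def[symmetric])
qed
end
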